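(* Let $\lambda>0$, let $d\ge1$ be an integer, and let $(X_t)_{t\ge1}$ be any sequence of vectors in $\mathbb R^p$ with $\|X_t\|_2\le1$. For $t\ge0$ let $V_t=\sum_{s=1}^tX_sX_s^\top+\lambda\mathrm{Id}$ (so $V_0=\lambda\mathrm{Id}$). Then for all $T\ge d+1$, $$\sum_{t=d+1}^T\min\big(1,\|X_t\|_{V_{t-d}^{-1}}^2\big)\le2dp\log\Big(1+\frac{T}{\lambda dp}\Big).$$
   Context: $\|u\|_A=\sqrt{u^\top Au}$ for a positive definite matrix $A$. *)

theory Defs
  imports "HOL-Analysis.Analysis"
begin

definition outer :: "real^'n \<Rightarrow> real^'n^'n" where
  "outer x = (\<chi> i j. x $ i * x $ j)"

definition design :: "real \<Rightarrow> (nat \<Rightarrow> real^'n) \<Rightarrow> nat \<Rightarrow> real^'n^'n" where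
  "design lam X t = (\<Sum>s\<in>{1..t}. outer (X s)) + lam *\<^sub>R mat 1"

definition wnorm :: "real^'n^'n \<Rightarrow> real^'n \<Rightarrow> real" where
  "wnorm A u = sqrt (u \<bullet> (A *v u))"

end

theory Submission
  imports Defs
begin

definition G :: "real \<Rightarrow> (nat \<Rightarrow> real^'n) \<Rightarrow> nat set \<Rightarrow> real^'n^'n" where
  "G lam y S = (\<Sum>s\<in>S. outer (y s)) + lam *\<^sub>R mat 1"

lemma outer_mulv: "outer y *v x = (y \<bullet> x) *\<^sub>R y"
  by (simp add: outer_def vec_eq_iff matrix_vector_mult_def inner_vec_def sum_distrib_left mult_ac)

lemma outer_transpose: "transpose (outer y) = outer y"
  by (simp add: outer_def transpose_def vec_eq_iff mult.commute)

lemma sum_mulv: "(\<Sum>s\<in>S. M s) *v x = (\<Sum>s\<in>S. M s *v x)"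
  by (induction S rule: infinite_finite_induct) (auto simp: matrix_vector_mult_add_rdistrib)

lemma G_mulv: "G lam y S *v x = (\<Sum>s\<in>S. (y s \<bullet> x) *\<^sub>R y s) + lam *\<^sub>R x"
  by (simp add: G_def matrix_vector_mult_add_rdistrib sum_mulv outer_mulv scaleR_matrix_vector_assoc[symmetric])

lemma G_quad: "x \<bullet> (G lam y S *v x) = (\<Sum>s\<in>S. (y s \<bullet> x)^2) + lam * (x \<bullet> x)"
  by (simp add: G_mulv inner_sum_right inner_add_right power2_eq_square inner_commute)

lemma G_transpose: "transpose (G lam y S) = G lam y S"
proof -
  have "transpose (\<Sum>s\<in>S. outer (y s)) = (\<Sum>s\<in>S. outer (y s))"
    by (induction S rule: infinite_finite_induct) (auto simp: outer_def transpose_def vec_eq_iff mult.commute)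
  then show ?thesis by (simp add: G_def transpose_def vec_eq_iff mat_def)
qed

lemma design_G: "design lam X t = G lam X {1..t}"
  by (simp add: design_def G_def)

lemma inv_props:
  assumes "invertible A"
  shows "A ** matrix_inv A = mat 1" "matrix_inv A ** A = mat 1"
proof -
  have "\<exists>A'. A ** A' = mat 1 \<and> A' ** A = mat 1" using assms invertible_def by blast
  from someI_ex[OF this] show "A ** matrix_inv A = mat 1" "matrix_inv A ** A = mat 1"
    unfolding matrix_inv_def by auto
qed

lemma inv_mulv:
  assumes "invertible (A::real^'n^'n)"
  shows "A *v (matrix_inv A *v x) = x" "matrix_inv A *v (A *v x) = x"
  using inv_props[OF assms] by (simp_all add: matrix_vector_mul_assoc)

lemma pd_invertible:
  fixes A :: "real^'n^'n"
  assumes "\<And>x. x \<noteq> 0 \<Longrightarrow> 0 < x \<bullet> (A *v x)"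
  shows "invertible A"
proof -
  have "inj ((*v) A)"
  proof (rule injI)
    fix x y assume "A *v x = A *v y"
    then have "A *v (x - y) = 0" by (simp add: matrix_vector_mult_diff_distrib)
    then have "(x - y) \<bullet> (A *v (x - y)) = 0" by simp
    then show "x = y" using assms[of "x - y"] by (cases "x - y = 0") auto
  qed
  then have "det (matrix ((*v) A)) \<noteq> 0"
    using det_nz_iff_inj[of "(*v) A"] by (simp add: matrix_vector_mul_linear)
  then show ?thesis by (simp add: invertible_det_nz)
qed

lemma G_pd:
  assumes "lam > 0" "x \<noteq> 0"
  shows "0 < x \<bullet> (G lam y S *v x)"
proof -
  have "0 \<le> (\<Sum>s\<in>S. (y s \<bullet> x)^2)" by (simp add: sum_nonneg)
  moreover have "0 < lam * (x \<bullet> x)" using assms by simp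
  ultimately show ?thesis by (simp add: G_quad)
qed

lemma G_inv: "lam > 0 \<Longrightarrow> invertible (G lam y S)"
  by (rule pd_invertible) (rule G_pd)



definition R :: "real^'n \<Rightarrow> real^'n \<Rightarrow> real^'n^'n" where
  "R a b = (\<chi> i j. a$i * b$j)"

lemma rows_id: "(\<chi> r. axis r 1 :: real^'n^'n) = mat 1"
  by (simp add: vec_eq_iff mat_def axis_def)

lemma det_mat: "det (mat c :: real^'n^'n) = c ^ CARD('n)"
proof -
  have "(mat c :: real^'n^'n) = (\<chi> r. c *s axis r 1)"
    by (simp add: vec_eq_iff mat_def axis_def)
  then show ?thesis using det_rows_mul[of "\<lambda>_. c" "\<lambda>r. axis r 1"]
    by (simp add: rows_id)
qed

lemma det_row_replace:
  fixes y :: "real^'n"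
  shows "det (\<chi> r. if r = k then y else axis r 1) = y $ k"
proof -
  define A :: "real^'n^'n" where "A = (\<chi> r. if r = k then (y$k) *s axis k 1 else axis r 1)"
  define z where "z = (\<Sum>r\<in>UNIV-{k}. (y$r) *s (axis r 1 :: real^'n))"
  have rowA: "row j A = (if j = k then (y$k) *s axis k 1 else axis j 1)" for j
    by (simp add: A_def row_def)
  have "z \<in> vec.span {row j A |j. j \<noteq> k}"
    unfolding z_def
    by (rule vec.span_sum, rule vec.span_scale, rule vec.span_base) (auto simp: rowA)
  from det_row_span[OF this]
  have "det (\<chi> r. if r = k then row k A + z else row r A) = det A" .
  moreover have "(\<chi> r. if r = k then row k A + z else row r A) = (\<chi> r. if r = k then y else axis r 1)"
  proof -
    have "row k A + z = y"
    proof -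
      have "row k A + z = (\<Sum>r\<in>UNIV. (y$r) *s (axis r 1 :: real^'n))"
        by (simp add: rowA z_def sum.remove[of UNIV k])
      also have "\<dots> = y"
        by (simp add: vec_eq_iff axis_def if_distrib[where f="\<lambda>t. _ * t"] cong: if_cong)
      finally show ?thesis .
    qed
    then show ?thesis by (simp add: vec_eq_iff rowA)
  qed
  moreover have "det A = y$k"
  proof -
    have "(\<chi> r. if r = k then axis k 1 else axis r 1 :: real^'n^'n) = mat 1"
      by (simp add: vec_eq_iff mat_def axis_def)
    have e1: "(\<chi> r. if r = k then y$k *s axis k 1 else axis r 1) = (\<chi> i. if i = k then y$k *s axis i 1 else (axis i 1::real^'n))"
      by (rule Cart_lambda_cong) simp
    then show ?thesis
    using det_row_mul[of k "y$k" "\<lambda>r. axis r 1" "\<lambda>r. axis r 1"]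
    by (simp add: A_def e1 rows_id)
  qed
  ultimately show ?thesis by simp
qed

lemma matrix_add_rdistrib: "((A::real^'n^'m) + B) ** C = A ** C + B ** C"
  by (vector matrix_matrix_mult_def sum.distrib[symmetric] field_simps)

lemma R_mult_left: "R a b ** M = R a (transpose M *v b)"
  by (simp add: R_def vec_eq_iff matrix_matrix_mult_def matrix_vector_mult_def transpose_def
      sum_distrib_left mult_ac)

lemma R_mult_right: "M ** R a b = R (M *v a) b"
  by (simp add: R_def vec_eq_iff matrix_matrix_mult_def matrix_vector_mult_def
      sum_distrib_right sum_distrib_left mult_ac)

lemma R_transpose: "transpose (R a b) = R b a"
  by (simp add: R_def transpose_def vec_eq_iff mult.commute)

lemma det_axis_rank1: "det (mat 1 + R (axis k 1) w) = 1 + w $ k"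
proof -
  have "mat 1 + R (axis k 1) w = (\<chi> r. if r = k then axis k 1 + w else axis r 1)"
    by (simp add: vec_eq_iff R_def mat_def axis_def)
  then show ?thesis by (simp add: det_row_replace)
qed

lemma det_I_rank1:
  fixes u v :: "real^'n"
  shows "det (mat 1 + R u v) = 1 + u \<bullet> v"
proof (cases "u = 0")
  case True
  then have "R u v = 0" by (simp add: R_def vec_eq_iff)
  then show ?thesis using True by simp
next
  case False
  then obtain k where k: "u $ k \<noteq> 0" by (auto simp: vec_eq_iff)
  define P :: "real^'n^'n" where "P = (\<chi> i j. if j = k then u$i else (if i = j then 1 else 0))"
  have tP: "transpose P = (\<chi> r. if r = k then u else axis r 1)"
    by (simp add: P_def transpose_def vec_eq_iff axis_def)
  have dP: "det P = u $ k"
    using det_row_replace[of k u] by (metis det_transpose tP)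
  define w where "w = transpose P *v v"
  have Pe: "P *v axis k 1 = u"
    by (simp add: P_def vec_eq_iff matrix_vector_mult_def axis_def if_distrib[where f="\<lambda>t. _ * t"] cong: if_cong)
  have eq: "(mat 1 + R u v) ** P = P ** (mat 1 + R (axis k 1) w)"
    by (simp add: matrix_add_ldistrib matrix_add_rdistrib R_mult_left R_mult_right Pe w_def)
  have "det (mat 1 + R u v) * det P = det P * (1 + w $ k)"
    using arg_cong[OF eq, of det] by (simp add: det_mul det_axis_rank1)
  then have "det (mat 1 + R u v) = 1 + w $ k" using dP k by simp
  moreover have "w $ k = u \<bullet> v"
    by (simp add: w_def matrix_vector_mult_def P_def transpose_def inner_vec_def)
  ultimately show ?thesis by simp
qed

lemma outer_R: "outer x = R x x"
  by (simp add: outer_def R_def)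

lemma det_rank1_update:
  fixes W :: "real^'n^'n"
  assumes "invertible W"
  shows "det (W + outer x) = det W * (1 + x \<bullet> (matrix_inv W *v x))"
proof -
  have "W + outer x = W ** (mat 1 + R (matrix_inv W *v x) x)"
    by (simp add: matrix_add_ldistrib R_mult_right inv_mulv[OF assms] outer_R)
  then show ?thesis by (simp add: det_mul det_I_rank1 inner_commute)
qed



definition E :: "'n set \<Rightarrow> real^'n^'n \<Rightarrow> real^'n^'n" where
  "E K A = (\<chi> i j. if i \<in> K \<and> j \<in> K then A$i$j else (if i = j then 1 else 0))"

lemma mulv_axis: "((M::real^'n^'m) *v axis i 1) $ r = M$r$i"
  by (simp add: matrix_vector_mult_def axis_def if_distrib[where f="\<lambda>t. _ * t"] cong: if_cong)

lemma axis_inner_mulv: "axis i 1 \<bullet> ((M::real^'n^'n) *v x) = (M *v x) $ i"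
  by (simp add: inner_axis')

lemma IRmult: fixes N :: "real^'n^'n" and v :: "real^'n" shows "((mat 1 + R v (axis i 1)) ** N) $ r $ s = N$r$s + v$r * N$i$s"
proof -
  have "(mat 1 + R v (axis i 1)) ** N = N + R v (transpose N *v axis i 1)"
    by (simp add: matrix_add_rdistrib R_mult_left)
  then show ?thesis by (simp add: R_def mulv_axis transpose_def)
qed

lemma multIR: fixes M :: "real^'n^'n" and v :: "real^'n" shows "(M ** transpose (mat 1 + R v (axis i 1))) $ r $ s = M$r$s + M$r$i * v$s"
proof -
  have "transpose (mat 1 + R v (axis i 1)) = mat 1 + R (axis i 1) v"
    by (simp add: R_def transpose_def vec_eq_iff mat_def mult.commute)
  then have "M ** transpose (mat 1 + R v (axis i 1)) = M + R (M *v axis i 1) v"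
    by (simp add: matrix_add_ldistrib R_mult_right)
  then show ?thesis by (simp add: R_def mulv_axis)
qed

lemma det_L: "v $ i = 0 \<Longrightarrow> det (mat 1 + R v (axis i 1)) = 1"
  by (simp add: det_I_rank1 inner_axis)

lemma hadamard:
  fixes A :: "real^'n^'n"
  assumes "transpose A = A" and "\<And>x. 0 \<le> x \<bullet> (A *v x)"
  shows "det (E K A) \<le> (\<Prod>k\<in>K. A$k$k)"
  using finite[of K] assms
proof (induction K arbitrary: A rule: finite_induct)
  case empty
  have "E {} A = mat 1" by (simp add: E_def mat_def vec_eq_iff)
  then show ?case by simp
next
  case (insert i K)
  have sym: "A$r$s = A$s$r" for r s
  proof -
    have "transpose A $ s $ r = A $ s $ r" using insert.prems(1) by simp
    then show ?thesis by (simp add: transpose_def)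
  qed
  have psd: "0 \<le> x \<bullet> (A *v x)" for x using insert.prems(2) .
  have diag: "A$k$k = axis k 1 \<bullet> (A *v axis k 1)" for k by (simp add: axis_inner_mulv mulv_axis)
  have diag_nn: "0 \<le> A$k$k" for k using diag psd by metis
  define a where "a = A$i$i"
  define e where "e = (axis i 1 :: real^'n)"
  define c where "c = A *v e"
  have c_ent: "c$r = A$r$i" for r by (simp add: c_def e_def mulv_axis)
  have eAx: "e \<bullet> (A *v x) = c \<bullet> x" for x
  proof -
    have "e \<bullet> (A *v x) = (\<Sum>j\<in>UNIV. A$i$j * x$j)"
      unfolding e_def axis_inner_mulv by (simp add: matrix_vector_mult_def)
    also have "\<dots> = (\<Sum>j\<in>UNIV. c$j * x$j)" by (simp add: c_ent sym[of i])
    also have "\<dots> = c \<bullet> x" by (simp add: inner_vec_def)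
    finally show ?thesis .
  qed
  have xAe: "x \<bullet> (A *v e) = c \<bullet> x" for x by (simp add: c_def inner_commute)
  have eAe: "e \<bullet> (A *v e) = a" by (simp add: e_def a_def diag)
  have ce: "c \<bullet> e = a" using eAe xAe[of e] by simp
  have quad: "(x + t *\<^sub>R e) \<bullet> (A *v (x + t *\<^sub>R e)) = x \<bullet> (A *v x) + 2*t*(c \<bullet> x) + t^2 * a" for x t
    by (simp add: matrix_vector_right_distrib matrix_vector_mult_scaleR inner_add_left inner_add_right
        eAx xAe eAe ce power2_eq_square algebra_simps)
  show ?case
  proof (cases "a = 0")
    case True
    have cx0: "c \<bullet> x = 0" for x
    proof (rule ccontr)
      assume ne: "c \<bullet> x \<noteq> 0"
      define t where "t = - (x \<bullet> (A *v x) + 1) / (2 * (c \<bullet> x))"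
      have "2*t*(c \<bullet> x) = -(x \<bullet> (A *v x) + 1)" using ne by (simp add: t_def)
      then have "(x + t *\<^sub>R e) \<bullet> (A *v (x + t *\<^sub>R e)) = -1" using quad[of x t] True by simp
      with psd[of "x + t *\<^sub>R e"] show False by simp
    qed
    then have "c = 0" by (metis inner_eq_zero_iff)
    then have "row i (E (insert i K) A) = 0"
      by (auto simp: row_def E_def vec_eq_iff c_ent[symmetric] sym[of i])
    then have "det (E (insert i K) A) = 0" by (rule det_zero_row)
    moreover have "0 \<le> (\<Prod>k\<in>insert i K. A$k$k)" by (simp add: prod_nonneg diag_nn)
    ultimately show ?thesis by simp
  next
    case False
    then have apos: "a > 0" using diag_nn[of i] a_def by (simp add: order_less_le)
    define S where "S = A - (1/a) *\<^sub>R R c c"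
    have S_ent: "S$r$s = A$r$s - A$r$i * A$s$i / a" for r s by (simp add: S_def R_def c_ent)
    have S_sym: "transpose S = S"
      by (simp add: vec_eq_iff transpose_def S_ent sym[of _ i] mult.commute)
        (metis sym)
    have S_quad: "x \<bullet> (S *v x) = x \<bullet> (A *v x) - (c \<bullet> x)^2 / a" for x
    proof -
      have "S *v x = A *v x - (1/a) *\<^sub>R ((c \<bullet> x) *\<^sub>R c)"
        by (simp add: S_def matrix_vector_mult_diff_rdistrib scaleR_matrix_vector_assoc[symmetric]
            outer_R[symmetric] outer_mulv)
      then show ?thesis by (simp add: inner_diff_right power2_eq_square inner_commute)
    qed
    have S_psd: "0 \<le> x \<bullet> (S *v x)" for x
    proof -
      have "x \<bullet> (A *v x) + 2*(-(c \<bullet> x)/a)*(c \<bullet> x) + (-(c \<bullet> x)/a)^2 * a = x \<bullet> (A *v x) - (c \<bullet> x)^2/a"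
        using apos by (simp add: field_simps power2_eq_square)
      then show ?thesis using quad[of x "-(c \<bullet> x)/a"] psd[of "x + (-(c \<bullet> x)/a) *\<^sub>R e"]
        by (simp add: S_quad)
    qed
    have S_diag: "S$k$k \<le> A$k$k" for k
      using apos by (simp add: S_ent)
    have S_diag_nn: "0 \<le> S$k$k" for k
      using S_psd[of "axis k 1"] by (simp add: axis_inner_mulv mulv_axis)
    have IH: "det (E K S) \<le> (\<Prod>k\<in>K. S$k$k)" using insert.IH[OF S_sym S_psd] .
    have pm: "(\<Prod>k\<in>K. S$k$k) \<le> (\<Prod>k\<in>K. A$k$k)" by (rule prod_mono) (simp add: S_diag S_diag_nn)
    define v :: "real^'n" where "v = (\<chi> r. if r \<in> K then A$r$i / a else 0)"
    define L where "L = mat 1 + R v (axis i 1)"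
    define N :: "real^'n^'n" where "N = (\<chi> r s. if r = i \<and> s = i then a else E K S $ r $ s)"
    have ent: "E (insert i K) A $ r $ s = (L ** N ** transpose L) $ r $ s" for r s
    proof -
      have "(L ** N ** transpose L) $ r $ s = N$r$s + v$r * N$i$s + (N$r$i + v$r * N$i$i) * v$s"
        by (simp add: L_def multIR IRmult)
      then show ?thesis
        using insert.hyps(2) apos by (auto simp: N_def E_def v_def S_ent a_def field_simps) (metis sym)+
    qed
    have fact: "E (insert i K) A = L ** N ** transpose L" by (simp add: vec_eq_iff ent)
    have dL: "det L = 1" using insert.hyps(2) by (simp add: L_def det_L v_def)
    have dN: "det N = a * det (E K S)"
    proof -
      have "N = (\<chi> r. if r = i then a *s row r (E K S) else row r (E K S))"
        using insert.hyps(2) by (simp add: vec_eq_iff N_def row_def E_def)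
      then show ?thesis using det_row_mul[of i a "\<lambda>r. row r (E K S)" "\<lambda>r. row r (E K S)"]
        by (simp add: row_def)
    qed
    have "det (E (insert i K) A) = a * det (E K S)" by (simp add: fact det_mul dL dN)
    also have "\<dots> \<le> a * (\<Prod>k\<in>K. A$k$k)" using IH pm apos by (simp add: mult_left_mono)
    also have "\<dots> = (\<Prod>k\<in>insert i K. A$k$k)" using insert.hyps by (simp add: a_def)
    finally show ?thesis .
  qed
qed



lemma G_insert: "finite A \<Longrightarrow> b \<notin> A \<Longrightarrow> G lam y (insert b A) = G lam y A + outer (y b)"
  by (simp add: G_def algebra_simps)

lemma det_G_empty: "det (G lam y {} :: real^'n^'n) = lam ^ CARD('n)"
proof -
  have "(G lam y {} :: real^'n^'n) = mat lam" by (simp add: G_def vec_eq_iff mat_def)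
  then show ?thesis by (simp add: det_mat)
qed

lemma telescope:
  fixes y :: "nat \<Rightarrow> real^'n"
  assumes "lam > 0" "finite S"
  shows "det (G lam y S) = lam ^ CARD('n) *
           (\<Prod>t\<in>S. 1 + y t \<bullet> (matrix_inv (G lam y {s\<in>S. s < t}) *v y t))"
  using assms(2)
proof (induction S rule: finite_linorder_max_induct)
  case empty
  then show ?case by (simp add: det_G_empty)
next
  case (insert b A)
  have bA: "b \<notin> A" using insert.hyps by auto
  have e1: "{s \<in> insert b A. s < b} = A" using insert.hyps by auto
  have e2: "{s \<in> insert b A. s < t} = {s \<in> A. s < t}" if "t \<in> A" for t
    using insert.hyps that by auto
  have "det (G lam y (insert b A)) = det (G lam y A) * (1 + y b \<bullet> (matrix_inv (G lam y A) *v y b))"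
    by (simp add: G_insert[OF insert.hyps(1) bA] det_rank1_update G_inv assms(1))
  also have "\<dots> = lam ^ CARD('n) *
           (\<Prod>t\<in>insert b A. 1 + y t \<bullet> (matrix_inv (G lam y {s\<in>insert b A. s < t}) *v y t))"
    using insert.IH insert.hyps(1) bA e1 e2 by (simp add: prod.insert mult_ac cong: prod.cong)
  finally show ?case .
qed

lemma u_nonneg:
  fixes y :: "nat \<Rightarrow> real^'n"
  assumes "lam > 0"
  shows "0 \<le> x \<bullet> (matrix_inv (G lam y S) *v x)"
proof -
  define z where "z = matrix_inv (G lam y S) *v x"
  have x: "x = G lam y S *v z" unfolding z_def by (rule sym, rule inv_mulv(1), rule G_inv[OF assms])
  have "0 \<le> z \<bullet> (G lam y S *v z)" using G_pd[OF assms, of z y S] by (cases "z = 0") auto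
  moreover have "x \<bullet> (matrix_inv (G lam y S) *v x) = z \<bullet> (G lam y S *v z)"
    by (subst (1) x) (simp add: z_def[symmetric] inner_commute)
  ultimately show ?thesis by simp
qed

lemma min_ln: assumes "0 \<le> (u::real)" shows "min 1 u \<le> 2 * ln (1 + u)"
proof -
  have "exp (min 1 u / 2) \<le> 1 + u"
  proof (cases "u \<le> 1")
    case True
    have "1 - u/2 \<le> exp (- (u/2))" using exp_ge_add_one_self[of "-(u/2)"] by simp
    then have "exp (u/2) * (1 - u/2) \<le> 1" by (simp add: exp_minus field_simps)
    moreover have "1 \<le> (1 + u) * (1 - u/2)" 
    proof -
      have "0 \<le> u * (1 - u)" using True assms by simp
      then show ?thesis by (simp add: algebra_simps)
    qed
    moreover have "0 < 1 - u/2" using True by simp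
    ultimately have "exp (u/2) \<le> 1 + u"
      by (smt (verit, ccfv_SIG) assms exp_gt_zero mult_le_cancel_right mult_nonneg_nonneg)
    then show ?thesis using True by simp
  next
    case False
    have "1 - 1/2 \<le> exp (- (1/2::real))" using exp_ge_add_one_self[of "-(1/2)"] by simp
    then have "exp (1/2::real) \<le> 2" by (simp add: exp_minus field_simps)
    then show ?thesis using False by simp
  qed
  then have "min 1 u / 2 \<le> ln (1 + u)" using assms by (subst ln_ge_iff) auto
  then show ?thesis by simp
qed



lemma amgm_ln:
  fixes f :: "'a \<Rightarrow> real"
  assumes "finite I" "I \<noteq> {}" "\<And>i. i \<in> I \<Longrightarrow> 0 < f i"
  shows "(\<Sum>i\<in>I. ln (f i)) \<le> card I * ln ((\<Sum>i\<in>I. f i) / card I)"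
proof -
  define M where "M = (\<Sum>i\<in>I. f i) / card I"
  have cpos: "card I > 0" using assms card_gt_0_iff by blast
  have Mpos: "M > 0" unfolding M_def using assms cpos by (simp add: sum_pos)
  have "ln (f i) - ln M \<le> f i / M - 1" if "i \<in> I" for i
    using ln_le_minus_one[of "f i / M"] assms(3)[OF that] Mpos by (simp add: ln_div)
  then have "(\<Sum>i\<in>I. ln (f i) - ln M) \<le> (\<Sum>i\<in>I. f i / M - 1)" by (rule sum_mono)
  also have "\<dots> = (\<Sum>i\<in>I. f i) / M - card I" by (simp add: sum_subtractf sum_divide_distrib)
  also have "\<dots> = 0"
  proof -
    have "0 < (\<Sum>i\<in>I. f i)" using assms by (simp add: sum_pos)
    then show ?thesis using cpos by (simp add: M_def)
  qed
  finally show ?thesis by (simp add: sum_subtractf M_def)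
qed

lemma G_diag: "G lam y S $ k $ k = (\<Sum>s\<in>S. (y s $ k)^2) + lam"
  by (simp add: G_def sum_component outer_def power2_eq_square mat_def)

lemma det_G_pos:
  fixes y :: "nat \<Rightarrow> real^'n"
  assumes "lam > 0" "finite S"
  shows "0 < det (G lam y S)"
  using assms by (simp add: telescope prod_pos u_nonneg add_pos_nonneg)

lemma E_UNIV: "E UNIV A = A" by (simp add: E_def)

lemma det_G_le:
  fixes y :: "nat \<Rightarrow> real^'n" and lam :: real
  assumes "lam > 0" "finite S" "\<And>s. s \<in> S \<Longrightarrow> norm (y s) \<le> 1"
  shows "ln (det (G lam y S)) \<le> CARD('n) * ln (lam + card S / CARD('n))"
proof -
  have pc: "(0::real) < CARD('n)" by simp
  have dpos: "0 < (G lam y S) $ k $ k" for k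
    using assms(1) by (simp add: G_diag add_nonneg_pos sum_nonneg)
  have "det (G lam y S) \<le> (\<Prod>k\<in>UNIV. G lam y S $ k $ k)"
  proof -
    have "0 \<le> x \<bullet> (G lam y S *v x)" for x
      using assms(1) by (simp add: G_quad sum_nonneg)
    then show ?thesis using hadamard[of "G lam y S" UNIV] by (simp add: E_UNIV G_transpose)
  qed
  then have "ln (det (G lam y S)) \<le> ln (\<Prod>k\<in>UNIV. G lam y S $ k $ k)"
    using det_G_pos[OF assms(1,2), where y=y] by (subst ln_le_cancel_iff) auto
  also have "\<dots> = (\<Sum>k\<in>UNIV. ln (G lam y S $ k $ k))"
    using dpos by (simp add: ln_prod less_imp_neq[symmetric]) 
  also have "\<dots> \<le> CARD('n) * ln ((\<Sum>k\<in>UNIV. G lam y S $ k $ k) / CARD('n))"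
    using amgm_ln[of UNIV "\<lambda>k. G lam y S $ k $ k"] dpos by simp
  also have "\<dots> \<le> CARD('n) * ln (lam + card S / CARD('n))"
  proof -
    have "(\<Sum>k\<in>UNIV. G lam y S $ k $ k) = (\<Sum>s\<in>S. (norm (y s))^2) + CARD('n) * lam"
    proof -
      have nn: "(\<Sum>k\<in>UNIV. (y s $ k)^2) = (norm (y s))^2" for s
      proof -
        have "(norm (y s))^2 = y s \<bullet> y s" by (rule power2_norm_eq_inner)
        also have "\<dots> = (\<Sum>k\<in>UNIV. (y s $ k)^2)" by (simp add: inner_vec_def power2_eq_square)
        finally show ?thesis by simp
      qed
      show ?thesis by (simp add: G_diag sum.distrib sum.swap[of _ S] nn)
    qed
    also have "\<dots> \<le> card S + CARD('n) * lam"
    proof -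
      have "(\<Sum>s\<in>S. (norm (y s))^2) \<le> (\<Sum>s\<in>S. 1)"
        by (rule sum_mono) (simp add: assms(3) power_le_one)
      then show ?thesis by simp
    qed
    finally have "(\<Sum>k\<in>UNIV. G lam y S $ k $ k) / CARD('n) \<le> lam + card S / CARD('n)"
      using pc by (simp add: field_simps)
    moreover have "0 < (\<Sum>k\<in>UNIV. G lam y S $ k $ k) / CARD('n)"
      using dpos pc by (simp add: sum_pos)
    ultimately show ?thesis using pc by (simp add: mult_left_mono)
  qed
  finally show ?thesis .
qed

lemma class_bound:
  fixes y :: "nat \<Rightarrow> real^'n" and lam :: real
  assumes "lam > 0" "finite S" "\<And>s. s \<in> S \<Longrightarrow> norm (y s) \<le> 1"
  shows "(\<Sum>t\<in>S. min 1 (y t \<bullet> (matrix_inv (G lam y {s\<in>S. s < t}) *v y t)))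
           \<le> 2 * CARD('n) * ln (1 + card S / (lam * CARD('n)))"
proof -
  define u where "u t = y t \<bullet> (matrix_inv (G lam y {s\<in>S. s < t}) *v y t)" for t
  have u0: "0 \<le> u t" for t unfolding u_def using u_nonneg[OF assms(1)] .
  have pc: "(0::real) < CARD('n)" by simp
  have "(\<Sum>t\<in>S. min 1 (u t)) \<le> (\<Sum>t\<in>S. 2 * ln (1 + u t))"
    by (rule sum_mono) (simp add: min_ln u0)
  also have "\<dots> = 2 * ln (\<Prod>t\<in>S. 1 + u t)"
  proof -
    have ne: "1 + u t \<noteq> 0" for t using u0[of t] by linarith
    have "ln (\<Prod>t\<in>S. 1 + u t) = (\<Sum>t\<in>S. ln (1 + u t))" using assms(2) ne by (intro ln_prod) auto
    then show ?thesis by (simp add: sum_distrib_left)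
  qed
  also have "ln (\<Prod>t\<in>S. 1 + u t) = ln (det (G lam y S)) - CARD('n) * ln lam"
  proof -
    have pp: "0 < (\<Prod>t\<in>S. 1 + u t)" using u0 by (simp add: prod_pos add_pos_nonneg)
    have "det (G lam y S) = lam ^ CARD('n) * (\<Prod>t\<in>S. 1 + u t)"
      unfolding u_def by (rule telescope[OF assms(1,2)])
    then have "ln (det (G lam y S)) = ln (lam ^ CARD('n)) + ln (\<Prod>t\<in>S. 1 + u t)"
      using pp assms(1) by (simp add: ln_mult)
    then show ?thesis using assms(1) by (simp add: ln_realpow)
  qed
  also have "2 * (ln (det (G lam y S)) - CARD('n) * ln lam) \<le> 2 * (CARD('n) * ln (lam + card S / CARD('n)) - CARD('n) * ln lam)"
    using det_G_le[OF assms] by simp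
  also have "CARD('n) * ln (lam + card S / CARD('n)) - CARD('n) * ln lam = CARD('n) * ln (1 + card S / (lam * CARD('n)))"
  proof -
    have "lam + card S / CARD('n) = lam * (1 + card S / (lam * CARD('n)))"
      using assms(1) pc by (simp add: field_simps)
    moreover have "0 < 1 + card S / (lam * CARD('n))" using assms(1) pc by (simp add: add_pos_nonneg)
    ultimately have "ln (lam + card S / CARD('n)) = ln lam + ln (1 + card S / (lam * CARD('n)))"
      using assms(1) by (simp add: ln_mult)
    then show ?thesis by (simp add: algebra_simps)
  qed
  finally show ?thesis unfolding u_def by (simp add: mult_ac)
qed

lemma inv_mono:
  fixes A B :: "real^'n^'n"
  assumes "invertible A" "invertible B" "transpose B = B"
    "\<And>x. x \<bullet> (B *v x) \<le> x \<bullet> (A *v x)" "\<And>x. 0 \<le> x \<bullet> (B *v x)"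
  shows "x \<bullet> (matrix_inv A *v x) \<le> x \<bullet> (matrix_inv B *v x)"
proof -
  define y where "y = matrix_inv A *v x"
  define z where "z = matrix_inv B *v x"
  have Ay: "A *v y = x" unfolding y_def by (rule inv_mulv(1)[OF assms(1)])
  have Bz: "B *v z = x" unfolding z_def by (rule inv_mulv(1)[OF assms(2)])
  have zBy: "z \<bullet> (B *v y) = x \<bullet> y"
  proof -
    have "z \<bullet> (B *v y) = (z v* B) \<bullet> y" by (simp add: dot_lmul_matrix)
    also have "z v* B = transpose B *v z" by simp
    finally show ?thesis using assms(3) Bz by simp
  qed
  have "0 \<le> (y - z) \<bullet> (B *v (y - z))" by (rule assms(5))
  also have "\<dots> = y \<bullet> (B *v y) - z \<bullet> (B *v y) - y \<bullet> (B *v z) + z \<bullet> (B *v z)"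
    by (simp add: matrix_vector_mult_diff_distrib inner_diff_left inner_diff_right)
  also have "\<dots> = y \<bullet> (B *v y) - 2 * (x \<bullet> y) + z \<bullet> x"
    using zBy Bz by (simp add: inner_commute)
  finally have 1: "0 \<le> y \<bullet> (B *v y) - 2 * (x \<bullet> y) + z \<bullet> x" .
  have "y \<bullet> (B *v y) \<le> y \<bullet> x" using assms(4)[of y] Ay by simp
  with 1 show ?thesis by (simp add: y_def[symmetric] z_def[symmetric] inner_commute)
qed



theorem lemma3:
  fixes X :: "nat \<Rightarrow> real^'p" and lam :: real and d T :: nat
  assumes "lam > 0" and "d \<ge> 1"
    and "\<And>t. t \<ge> 1 \<Longrightarrow> norm (X t) \<le> 1"
    and "T \<ge> d + 1"
  shows "(\<Sum>t\<in>{d+1..T}. min 1 ((wnorm (matrix_inv (design lam X (t - d))) (X t))\<^sup>2))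
          \<le> 2 * real d * real CARD('p) * ln (1 + real T / (lam * real d * real CARD('p)))"
proof -
  have pc: "(0::real) < CARD('p)" by simp
  have dpos: "(0::real) < d" using assms(2) by simp
  define Cl where "Cl r = {t\<in>{d+1..T}. t mod d = r}" for r
  define F where "F t = min 1 (X t \<bullet> (matrix_inv (G lam X {s\<in>Cl (t mod d). s < t}) *v X t))" for t
  have step1: "min 1 ((wnorm (matrix_inv (design lam X (t - d))) (X t))\<^sup>2) \<le> F t"
    if t: "t \<in> {d+1..T}" for t
  proof -
    define V where "V = G lam X {1..t-d}"
    define B where "B = G lam X {s\<in>Cl (t mod d). s < t}"
    have sub: "{s\<in>Cl (t mod d). s < t} \<subseteq> {1..t-d}"
    proof
      fix s assume s: "s \<in> {s\<in>Cl (t mod d). s < t}"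
      then have s1: "s \<ge> d + 1" "s < t" "s mod d = t mod d" by (auto simp: Cl_def)
      then have "d dvd t - s" using mod_eq_dvd_iff_nat[of s t d] by simp
      moreover have "t - s > 0" using s1 by simp
      ultimately have "d \<le> t - s" by (simp add: dvd_imp_le)
      then show "s \<in> {1..t-d}" using s1 by auto
    qed
    have q0: "0 \<le> X t \<bullet> (matrix_inv V *v X t)" unfolding V_def by (rule u_nonneg[OF assms(1)])
    have "(wnorm (matrix_inv (design lam X (t - d))) (X t))\<^sup>2 = X t \<bullet> (matrix_inv V *v X t)"
      using q0 by (simp add: wnorm_def design_G V_def)
    also have "\<dots> \<le> X t \<bullet> (matrix_inv B *v X t)"
    proof (rule inv_mono)
      show "invertible V" unfolding V_def by (rule G_inv[OF assms(1)])
      show "invertible B" unfolding B_def by (rule G_inv[OF assms(1)])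
      show "transpose B = B" unfolding B_def by (rule G_transpose)
      show "0 \<le> x \<bullet> (B *v x)" for x
        unfolding B_def using assms(1) by (simp add: G_quad sum_nonneg)
      show "x \<bullet> (B *v x) \<le> x \<bullet> (V *v x)" for x
      proof -
        have "(\<Sum>s\<in>{s\<in>Cl (t mod d). s < t}. (X s \<bullet> x)^2) \<le> (\<Sum>s\<in>{1..t-d}. (X s \<bullet> x)^2)"
          by (rule sum_mono2[OF _ sub]) auto
        then show ?thesis unfolding B_def V_def by (simp add: G_quad)
      qed
    qed
    finally show ?thesis unfolding F_def B_def by simp
  qed
  have "(\<Sum>t\<in>{d+1..T}. min 1 ((wnorm (matrix_inv (design lam X (t - d))) (X t))\<^sup>2))
        \<le> (\<Sum>t\<in>{d+1..T}. F t)" by (rule sum_mono) (rule step1)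
  also have "\<dots> = (\<Sum>r\<in>{..<d}. (\<Sum>t\<in>Cl r. F t))"
    unfolding Cl_def by (rule sum.group[symmetric]) (use assms(2) in auto)
  also have "\<dots> \<le> (\<Sum>r\<in>{..<d}. 2 * CARD('p) * ln (1 + card (Cl r) / (lam * CARD('p))))"
  proof (rule sum_mono)
    fix r assume "r \<in> {..<d}"
    have "(\<Sum>t\<in>Cl r. F t) = (\<Sum>t\<in>Cl r. min 1 (X t \<bullet> (matrix_inv (G lam X {s\<in>Cl r. s < t}) *v X t)))"
      by (rule sum.cong) (auto simp: F_def Cl_def)
    also have "\<dots> \<le> 2 * CARD('p) * ln (1 + card (Cl r) / (lam * CARD('p)))"
      by (rule class_bound[OF assms(1)]) (auto simp: Cl_def intro: assms(3))
    finally show "(\<Sum>t\<in>Cl r. F t) \<le> 2 * CARD('p) * ln (1 + card (Cl r) / (lam * CARD('p)))" .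
  qed
  also have "\<dots> = 2 * CARD('p) * (\<Sum>r\<in>{..<d}. ln (1 + card (Cl r) / (lam * CARD('p))))"
    by (simp add: sum_distrib_left)
  also have "\<dots> \<le> 2 * CARD('p) * (d * ln ((\<Sum>r\<in>{..<d}. 1 + card (Cl r) / (lam * CARD('p))) / d))"
  proof -
    have "(\<Sum>r\<in>{..<d}. ln (1 + card (Cl r) / (lam * CARD('p))))
        \<le> card {..<d} * ln ((\<Sum>r\<in>{..<d}. 1 + card (Cl r) / (lam * CARD('p))) / card {..<d})"
      using assms(1,2) pc by (intro amgm_ln) (auto simp: add_pos_nonneg lessThan_empty_iff)
    then show ?thesis using pc by simp
  qed
  also have "\<dots> \<le> 2 * real d * real CARD('p) * ln (1 + real T / (lam * real d * real CARD('p)))"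
  proof -
    have csum: "(\<Sum>r\<in>{..<d}. card (Cl r)) = card {d+1..T}"
    proof -
      have "(\<Sum>r\<in>{..<d}. card (Cl r)) = (\<Sum>r\<in>{..<d}. \<Sum>t\<in>Cl r. (1::nat))" by simp
      also have "\<dots> = (\<Sum>t\<in>{d+1..T}. (1::nat))"
        unfolding Cl_def by (rule sum.group) (use assms(2) in auto)
      finally show ?thesis by simp
    qed
    have "(\<Sum>r\<in>{..<d}. 1 + card (Cl r) / (lam * CARD('p))) = d + (T - d) / (lam * CARD('p))"
    proof -
      have "(\<Sum>r\<in>{..<d}. 1 + card (Cl r) / (lam * CARD('p))) = d + (\<Sum>r\<in>{..<d}. real (card (Cl r))) / (lam * CARD('p))"
        by (simp add: sum.distrib sum_divide_distrib)
      also have "(\<Sum>r\<in>{..<d}. real (card (Cl r))) = real (T - d)"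
        using csum by (metis card_atLeastAtMost diff_Suc_Suc add.commute plus_1_eq_Suc of_nat_sum)
      finally show ?thesis using assms(4) by simp
    qed
    then have "(\<Sum>r\<in>{..<d}. 1 + card (Cl r) / (lam * CARD('p))) / d = 1 + (T - d) / (lam * d * CARD('p))"
      using dpos pc assms(1) by (simp add: field_simps)
    moreover have "1 + (T - d) / (lam * d * CARD('p)) \<le> 1 + T / (lam * d * CARD('p))"
      using dpos pc assms(1) by (simp add: divide_right_mono)
    moreover have "0 < 1 + (T - d) / (lam * d * CARD('p))"
      using dpos pc assms(1) by (simp add: add_pos_nonneg)
    ultimately have "ln ((\<Sum>r\<in>{..<d}. 1 + card (Cl r) / (lam * CARD('p))) / d) \<le> ln (1 + T / (lam * d * CARD('p)))"
      by simp
    then show ?thesis using dpos pc by (simp add: mult_left_mono)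
  qed
  finally show ?thesis .
qed


end
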